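(* For any matrix $Z=(Z_{ij})_{1\leq i,j\leq 3}$ of formal variables $Z_{ij}$, we have $$ \left(A|_{v = -p} \right)Z \left(\frac{\det(A)}{P(v)} A^{-1} \Big|_{v = -p}\right)=(U_{ij}X_j)_{1\leq i,j\leq 3} $$ with $pX_j\in R^{\mathrm{aux}}[Z_{ij},\, 1\leq i,j\leq 3]$, where $U=A|_{v=-p}$.
   Context: $p>3$ is prime, $\mathcal{O}$ is the ring of integers of a finite extension of $\mathbb{Q}_p$, and $P(v)=v+p$. Let $$ A = \begin{pmatrix} c_{11}+c_{11}^*(v+p)&c_{12}&c_{13}\\ vc_{21}&c_{22}+ c_{22}^*(v+p) &c_{23}\\ vc_{31}&vc_{32}&c_{33}+c_{33}^*(v+p) \end{pmatrix}. $$ $R^{\mathrm{aux}}$ is the $p$-saturation of the quotient of $\mathcal{O}[c_{ij},(c^{*}_{ii})^{\pm 1},\,1\leq i,j\leq 3]$ by the relations: all $2\times 2$ minors of $U=A|_{v=-p}=\begin{pmatrix}c_{11}&c_{12}&c_{13}\\-pc_{21}&c_{22}&c_{23}\\-pc_{31}&-pc_{32}&c_{33}\end{pmatrix}$ vanish, and $c_{11}c^*_{22}c^*_{33}+c_{22}c^*_{33}c^*_{11}+c_{33}c^*_{11}c^*_{22}-c_{11}^*c_{23}c_{32}-c_{22}^*c_{13}c_{31}-c_{33}^*c_{12}c_{21}+c_{21}c_{13}c_{32}=0$. Then $\frac{\det(A)}{P(v)}A^{-1}|_{v=-p}$ is the matrix $$\begin{pmatrix} c_{22}^* c_{33} + c_{33}^*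 c_{22} - c_{23} c_{32} & c_{13} c_{32} - c^*_{33} c_{12} & -c_{22}^* c_{13}\\ p c_{33}^* c_{21} & c_{11}^* c_{33} + c_{33}^* c_{11} - c_{13} c_{31}&c_{13} c_{21} - c_{11}^*c_{23}\\ -p c_{21} c_{32} + p c^*_{22} c_{31} & pc_{11}^* c_{32} & c_{11}^* c_{22} + c_{22}^* c_{11} - c_{12} c_{21} \end{pmatrix}.$$ It is known that $R^{\mathrm{aux}}$ is a domain in which every $c_{ij}$ is nonzero. *)

theory Defs
  imports Main "HOL-Library.Poly_Mapping" "HOL-Computational_Algebra.Primes"
begin

text \<open>The ring R[Z_ij, 1 \<le> i,j \<le> 3] of polynomials in the nine formal variables Z_ij
  over a commutative ring R, realised as finitely supported maps from monomials
  (finitely supported exponent vectors indexed by pairs (i,j)) to coefficients.\<close>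
type_synonym 'a mpolyZ = "((nat \<times> nat) \<Rightarrow>\<^sub>0 nat) \<Rightarrow>\<^sub>0 'a"

definition Zvar :: "nat \<Rightarrow> nat \<Rightarrow> 'a::comm_ring_1 mpolyZ" where
  "Zvar i j = Poly_Mapping.single (Poly_Mapping.single (i, j) 1) 1"

definition cst :: "'a::comm_ring_1 \<Rightarrow> 'a mpolyZ" where
  "cst a = Poly_Mapping.single 0 a"

text \<open>U = A at v = -p, entries indexed by 1..3; c i j stands for c_ij, p is the prime.\<close>
definition Umat :: "nat \<Rightarrow> (nat \<Rightarrow> nat \<Rightarrow> 'a::comm_ring_1) \<Rightarrow> nat \<Rightarrow> nat \<Rightarrow> 'a" where
  "Umat p c i j = (if i \<le> j then c i j else - of_nat p * c i j)"

text \<open>The matrix (det A / P(v)) A^{-1} at v = -p, as given explicitly in the context;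
  cs i stands for c_ii^*.\<close>
definition Wmat :: "nat \<Rightarrow> (nat \<Rightarrow> nat \<Rightarrow> 'a::comm_ring_1) \<Rightarrow> (nat \<Rightarrow> 'a) \<Rightarrow> nat \<Rightarrow> nat \<Rightarrow> 'a" where
  "Wmat p c cs i j =
    (if i = 1 \<and> j = 1 then cs 2 * c 3 3 + cs 3 * c 2 2 - c 2 3 * c 3 2
     else if i = 1 \<and> j = 2 then c 1 3 * c 3 2 - cs 3 * c 1 2
     else if i = 1 \<and> j = 3 then - cs 2 * c 1 3
     else if i = 2 \<and> j = 1 then of_nat p * cs 3 * c 2 1
     else if i = 2 \<and> j = 2 then cs 1 * c 3 3 + cs 3 * c 1 1 - c 1 3 * c 3 1
     else if i = 2 \<and> j = 3 then c 1 3 * c 2 1 - cs 1 * c 2 3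
     else if i = 3 \<and> j = 1 then - of_nat p * c 2 1 * c 3 2 + of_nat p * cs 2 * c 3 1
     else if i = 3 \<and> j = 2 then of_nat p * cs 1 * c 3 2
     else if i = 3 \<and> j = 3 then cs 1 * c 2 2 + cs 2 * c 1 1 - c 1 2 * c 2 1
     else 0)"

text \<open>Defining relations of R^aux (besides the c_ii^* being units).\<close>
definition aux_relations :: "nat \<Rightarrow> (nat \<Rightarrow> nat \<Rightarrow> 'a::comm_ring_1) \<Rightarrow> (nat \<Rightarrow> 'a) \<Rightarrow> bool" where
  "aux_relations p c cs \<longleftrightarrow>
     (\<forall>i1\<in>{1..3}. \<forall>i2\<in>{1..3}. \<forall>j1\<in>{1..3}. \<forall>j2\<in>{1..3}.
        Umat p c i1 j1 * Umat p c i2 j2 - Umat p c i1 j2 * Umat p c i2 j1 = 0) \<and>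
     c 1 1 * cs 2 * cs 3 + c 2 2 * cs 3 * cs 1 + c 3 3 * cs 1 * cs 2
       - cs 1 * c 2 3 * c 3 2 - cs 2 * c 1 3 * c 3 1 - cs 3 * c 1 2 * c 2 1
       + c 2 1 * c 1 3 * c 3 2 = 0"

end

theory Submission
  imports Defs
begin

lemma sum13: "(\<Sum>k\<in>{1..3::nat}. f k) = f 1 + f 2 + f 3"
proof -
  have "{1..3::nat} = {1,2,3}" by auto
  then show ?thesis by (simp add: add.assoc)
qed

lemma cst_mult: "cst (a * b) = cst a * (cst b :: 'a::comm_ring_1 mpolyZ)"
  by (simp add: cst_def mult_single)

lemma scalar_facts:
  fixes P :: "'a::idom" and c :: "nat \<Rightarrow> nat \<Rightarrow> 'a"
  assumes m0: "\<forall>i1\<in>{1..3}. \<forall>j1\<in>{1..3}. \<forall>i2\<in>{1..3}. \<forall>j2\<in>{1..3}.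
     (if i1 \<le> j1 then c i1 j1 else - P * c i1 j1) * (if i2 \<le> j2 then c i2 j2 else - P * c i2 j2)
   - (if i1 \<le> j2 then c i1 j2 else - P * c i1 j2) * (if i2 \<le> j1 then c i2 j1 else - P * c i2 j1) = 0"
  and cub: "c 1 1 * sb * sc + c 2 2 * sc * sa + c 3 3 * sa * sb
       - sa * c 2 3 * c 3 2 - sb * c 1 3 * c 3 1 - sc * c 1 2 * c 2 1
       + c 2 1 * c 1 3 * c 3 2 = 0"
  and P: "P \<noteq> 0"
  shows
   "sa * P * (sb * c 3 3 + sc * c 2 2 - c 2 3 * c 3 2) + c 1 1 * (sb * c 3 3 + sc * c 2 2 - c 2 3 * c 3 2) + P * c 1 1 * sb * sc = 0"
   "sb * P * (sa * c 3 3 + sc * c 1 1 - c 1 3 * c 3 1) + c 2 2 * (sa * c 3 3 + sc * c 1 1 - c 1 3 * c 3 1) + P * c 2 2 * sa * sc = 0"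
   "sc * P * (sa * c 2 2 + sb * c 1 1 - c 1 2 * c 2 1) + c 3 3 * (sa * c 2 2 + sb * c 1 1 - c 1 2 * c 2 1) + P * c 3 3 * sa * sb = 0"
   "P * c 2 2 * c 3 1 + P * P * c 2 1 * c 3 2 = 0"
   "c 1 1 * c 2 3 + P * c 1 3 * c 2 1 = 0"
proof -
  have m: "(if i1 \<le> j1 then c i1 j1 else - P * c i1 j1) * (if i2 \<le> j2 then c i2 j2 else - P * c i2 j2)
   - (if i1 \<le> j2 then c i1 j2 else - P * c i1 j2) * (if i2 \<le> j1 then c i2 j1 else - P * c i2 j1) = 0"
    if "i1\<in>{1..3}" "j1\<in>{1..3}" "i2\<in>{1..3}" "j2\<in>{1..3}" for i1 j1 i2 j2
    using m0 that by blast
  have a: "c 1 1 * c 2 2 + P * c 1 2 * c 2 1 = 0" using m[of 1 1 2 2] by (simp add: algebra_simps)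
  have b: "c 1 1 * c 3 3 + P * c 1 3 * c 3 1 = 0" using m[of 1 1 3 3] by (simp add: algebra_simps)
  have d: "c 1 1 * c 2 3 + P * c 1 3 * c 2 1 = 0" using m[of 1 1 2 3] by (simp add: algebra_simps)
  have e: "c 1 2 * c 2 3 - c 1 3 * c 2 2 = 0" using m[of 1 2 2 3] by (simp add: algebra_simps)
  have f0: "P * (c 1 1 * c 3 2 - c 1 2 * c 3 1) = 0" using m[of 1 1 3 2] by (simp add: algebra_simps) (metis mult.commute)
  have f: "c 1 1 * c 3 2 - c 1 2 * c 3 1 = 0" using f0 P by simp
  have g: "c 1 2 * c 3 3 + P * c 1 3 * c 3 2 = 0" using m[of 1 2 3 3] by (simp add: algebra_simps)
  have h0: "P * (P * c 2 1 * c 3 2 + c 2 2 * c 3 1) = 0" using m[of 2 1 3 2] by (simp add: algebra_simps)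
  have h: "P * c 2 1 * c 3 2 + c 2 2 * c 3 1 = 0" using h0 P by simp
  have k0: "P * (c 2 1 * c 3 3 - c 2 3 * c 3 1) = 0" using m[of 2 1 3 3] by (simp add: algebra_simps) (metis mult.commute)
  have k: "c 2 1 * c 3 3 - c 2 3 * c 3 1 = 0" using k0 P by simp
  have l: "c 2 2 * c 3 3 + P * c 2 3 * c 3 2 = 0" using m[of 2 2 3 3] by (simp add: algebra_simps)
  show "P * c 2 2 * c 3 1 + P * P * c 2 1 * c 3 2 = 0" using h by algebra
  show "c 1 1 * c 2 3 + P * c 1 3 * c 2 1 = 0" by (fact d)
  show "sa * P * (sb * c 3 3 + sc * c 2 2 - c 2 3 * c 3 2) + c 1 1 * (sb * c 3 3 + sc * c 2 2 - c 2 3 * c 3 2) + P * c 1 1 * sb * sc = 0"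
    using a b d cub by algebra
  show "sb * P * (sa * c 3 3 + sc * c 1 1 - c 1 3 * c 3 1) + c 2 2 * (sa * c 3 3 + sc * c 1 1 - c 1 3 * c 3 1) + P * c 2 2 * sa * sc = 0"
    using a b d e f g h k l cub by algebra
  show "sc * P * (sa * c 2 2 + sb * c 1 1 - c 1 2 * c 2 1) + c 3 3 * (sa * c 2 2 + sb * c 1 1 - c 1 2 * c 2 1) + P * c 3 3 * sa * sb = 0"
    using a b d e f g h k l cub by algebra
qed


theorem lemma8p2:
  fixes p :: nat and c :: "nat \<Rightarrow> nat \<Rightarrow> 'a::idom" and cs :: "nat \<Rightarrow> 'a"
  assumes "prime p" and "p > 3"
    and "of_nat p \<noteq> (0::'a)"
    and "\<forall>i\<in>{1..3}. cs i dvd 1"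
    and "aux_relations p c cs"
    and "\<forall>i\<in>{1..3}. \<forall>j\<in>{1..3}. c i j \<noteq> 0"
  shows "\<exists>pX :: nat \<Rightarrow> 'a mpolyZ. \<forall>i\<in>{1..3}. \<forall>j\<in>{1..3}.
           cst (of_nat p) * (\<Sum>k\<in>{1..3}. \<Sum>l\<in>{1..3}.
              cst (Umat p c i k) * Zvar k l * cst (Wmat p c cs l j))
           = cst (Umat p c i j) * pX j"
proof -
  define P :: 'a where "P = of_nat p"
  have P0: "P \<noteq> 0" using assms(3) by (simp add: P_def)
  have "cs 1 dvd 1" using assms(4) by auto
  then obtain t1 where t1: "1 = cs 1 * t1" by (elim dvdE)
  have "cs 2 dvd 1" using assms(4) by auto
  then obtain t2 where t2: "1 = cs 2 * t2" by (elim dvdE)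
  have "cs 3 dvd 1" using assms(4) by auto
  then obtain t3 where t3: "1 = cs 3 * t3" by (elim dvdE)
  have M: "\<And>i1 j1 i2 j2. i1\<in>{1..3} \<Longrightarrow> j1\<in>{1..3} \<Longrightarrow> i2\<in>{1..3} \<Longrightarrow> j2\<in>{1..3} \<Longrightarrow>
     Umat p c i1 j1 * Umat p c i2 j2 - Umat p c i1 j2 * Umat p c i2 j1 = 0"
    using assms(5) unfolding aux_relations_def by blast
  have cub: "c 1 1 * cs 2 * cs 3 + c 2 2 * cs 3 * cs 1 + c 3 3 * cs 1 * cs 2
       - cs 1 * c 2 3 * c 3 2 - cs 2 * c 1 3 * c 3 1 - cs 3 * c 1 2 * c 2 1
       + c 2 1 * c 1 3 * c 3 2 = 0"
    using assms(5) unfolding aux_relations_def by blast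
  have M': "\<forall>i1\<in>{1..3}. \<forall>j1\<in>{1..3}. \<forall>i2\<in>{1..3}. \<forall>j2\<in>{1..3}.
     (if i1 \<le> j1 then c i1 j1 else - P * c i1 j1) * (if i2 \<le> j2 then c i2 j2 else - P * c i2 j2)
   - (if i1 \<le> j2 then c i1 j2 else - P * c i1 j2) * (if i2 \<le> j1 then c i2 j1 else - P * c i2 j1) = 0"
    using assms(5) unfolding aux_relations_def Umat_def P_def by blast
  note SF = scalar_facts[where P=P and c=c and sa="cs 1" and sb="cs 2" and sc="cs 3", OF M' cub P0]
  define al where "al j l m =
    (if j = 1 \<and> l = 1 \<and> m = 1 then - t1 * (Wmat p c cs 1 1 + P * cs 2 * cs 3)
     else if j = 1 \<and> l = 2 \<and> m = 2 then - P * cs 3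
     else if j = 1 \<and> l = 3 \<and> m = 3 then - (P * cs 2 + c 2 2)
     else if j = 2 \<and> l = 1 \<and> m = 1 then - P * cs 3
     else if j = 2 \<and> l = 1 \<and> m = 3 then - c 1 3
     else if j = 2 \<and> l = 2 \<and> m = 2 then - t2 * (Wmat p c cs 2 2 + P * cs 1 * cs 3)
     else if j = 2 \<and> l = 3 \<and> m = 3 then - P * cs 1
     else if j = 3 \<and> l = 1 \<and> m = 1 then - P * cs 2
     else if j = 3 \<and> l = 2 \<and> m = 2 then - (c 1 1 + P * cs 1)
     else if j = 3 \<and> l = 3 \<and> m = 3 then - t3 * (Wmat p c cs 3 3 + P * cs 1 * cs 2)
     else 0)" for j l m :: nat
  have H11: "P * Wmat p c cs 1 1 = (\<Sum>m\<in>{1..3}. al 1 1 m * Umat p c m 1)"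
    unfolding sum13
    by (simp add: al_def Wmat_def Umat_def P_def[symmetric],
      (simp only: One_nat_def[symmetric])?, (insert SF(1) t1, algebra)?)
  have H12: "P * Wmat p c cs 2 1 = (\<Sum>m\<in>{1..3}. al 1 2 m * Umat p c m 1)"
    unfolding sum13
    by (simp add: al_def Wmat_def Umat_def P_def[symmetric],
      (simp only: One_nat_def[symmetric])?, (algebra)?)
  have H13: "P * Wmat p c cs 3 1 = (\<Sum>m\<in>{1..3}. al 1 3 m * Umat p c m 1)"
    unfolding sum13
    by (simp add: al_def Wmat_def Umat_def P_def[symmetric],
      (simp only: One_nat_def[symmetric])?, (insert SF(4), algebra)?)
  have H21: "P * Wmat p c cs 1 2 = (\<Sum>m\<in>{1..3}. al 2 1 m * Umat p c m 2)"
    unfolding sum13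
    by (simp add: al_def Wmat_def Umat_def P_def[symmetric],
      (simp only: One_nat_def[symmetric])?, (algebra)?)
  have H22: "P * Wmat p c cs 2 2 = (\<Sum>m\<in>{1..3}. al 2 2 m * Umat p c m 2)"
    unfolding sum13
    by (simp add: al_def Wmat_def Umat_def P_def[symmetric],
      (simp only: One_nat_def[symmetric])?, (insert SF(2) t2, algebra)?)
  have H23: "P * Wmat p c cs 3 2 = (\<Sum>m\<in>{1..3}. al 2 3 m * Umat p c m 2)"
    unfolding sum13
    by (simp add: al_def Wmat_def Umat_def P_def[symmetric],
      (simp only: One_nat_def[symmetric])?, (algebra)?)
  have H31: "P * Wmat p c cs 1 3 = (\<Sum>m\<in>{1..3}. al 3 1 m * Umat p c m 3)"
    unfolding sum13
    by (simp add: al_def Wmat_def Umat_def P_def[symmetric],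
      (simp only: One_nat_def[symmetric])?, (algebra)?)
  have H32: "P * Wmat p c cs 2 3 = (\<Sum>m\<in>{1..3}. al 3 2 m * Umat p c m 3)"
    unfolding sum13
    apply (simp add: al_def Wmat_def Umat_def P_def[symmetric])
    apply (simp only: One_nat_def[symmetric])
    using SF(5) by algebra
  have H33: "P * Wmat p c cs 3 3 = (\<Sum>m\<in>{1..3}. al 3 3 m * Umat p c m 3)"
    unfolding sum13
    by (simp add: al_def Wmat_def Umat_def P_def[symmetric],
      (simp only: One_nat_def[symmetric])?, (insert SF(3) t3, algebra)?)
  have H: "P * Wmat p c cs l j = (\<Sum>m\<in>{1..3}. al j l m * Umat p c m j)"
    if "j \<in> {1..3}" "l \<in> {1..3}" for j l
  proof -
    have "j = 1 \<or> j = 2 \<or> j = 3" "l = 1 \<or> l = 2 \<or> l = 3" using that by auto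
    then show ?thesis using H11 H12 H13 H21 H22 H23 H31 H32 H33 by (elim disjE) simp_all
  qed
  define e where "e j k l = (\<Sum>m\<in>{1..3}. al j l m * Umat p c m k)" for j k l
  have key: "P * (Umat p c i k * Wmat p c cs l j) = Umat p c i j * e j k l"
    if "i\<in>{1..3}" "j\<in>{1..3}" "k\<in>{1..3}" "l\<in>{1..3}" for i j k l
  proof -
    have "Umat p c i j * e j k l = (\<Sum>m\<in>{1..3}. al j l m * (Umat p c i j * Umat p c m k))"
      by (simp add: e_def sum_distrib_left mult_ac)
    also have "\<dots> = (\<Sum>m\<in>{1..3}. al j l m * (Umat p c m j * Umat p c i k))"
    proof (rule sum.cong[OF refl])
      fix m assume "m \<in> {1..3::nat}"
      then have "Umat p c i j * Umat p c m k - Umat p c i k * Umat p c m j = 0"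
        using M[of i j m k] that by blast
      then show "al j l m * (Umat p c i j * Umat p c m k) = al j l m * (Umat p c m j * Umat p c i k)"
        by (metis mult.commute right_minus_eq)
    qed
    also have "\<dots> = Umat p c i k * (\<Sum>m\<in>{1..3}. al j l m * Umat p c m j)"
      by (simp add: sum_distrib_left mult_ac)
    also have "\<dots> = Umat p c i k * (P * Wmat p c cs l j)" using H[OF that(2) that(4)] by simp
    finally show ?thesis by (simp add: mult_ac)
  qed
  show ?thesis
  proof (intro exI[of _ "\<lambda>j. \<Sum>k\<in>{1..3}. \<Sum>l\<in>{1..3}. cst (e j k l) * Zvar k l"] ballI)
    fix i j assume i: "i \<in> {1..3::nat}" and j: "j \<in> {1..3::nat}"
    have "cst (of_nat p) * (\<Sum>k\<in>{1..3}. \<Sum>l\<in>{1..3}.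
              cst (Umat p c i k) * Zvar k l * cst (Wmat p c cs l j))
         = (\<Sum>k\<in>{1..3}. \<Sum>l\<in>{1..3}. cst (P * (Umat p c i k * Wmat p c cs l j)) * (Zvar k l :: 'a mpolyZ))"
      unfolding sum_distrib_left
      by (intro sum.cong refl) (simp add: cst_mult P_def mult_ac)
    also have "\<dots> = (\<Sum>k\<in>{1..3}. \<Sum>l\<in>{1..3}. cst (Umat p c i j * e j k l) * Zvar k l)"
      using key[OF i j] by (intro sum.cong refl) simp
    also have "\<dots> = cst (Umat p c i j) * (\<Sum>k\<in>{1..3}. \<Sum>l\<in>{1..3}. cst (e j k l) * Zvar k l)"
      unfolding sum_distrib_left by (intro sum.cong refl) (simp add: cst_mult mult_ac)
    finally show "cst (of_nat p) * (\<Sum>k\<in>{1..3}. \<Sum>l\<in>{1..3}.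
              cst (Umat p c i k) * Zvar k l * cst (Wmat p c cs l j))
         = cst (Umat p c i j) * (\<Sum>k\<in>{1..3}. \<Sum>l\<in>{1..3}. cst (e j k l) * Zvar k l)" .
  qed
qed

end
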